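(* Let $u,v\in\mathbb{Z}[i]$ with $u+v\in O^I$, $uv\equiv0\pmod{1+i}$ and $\gcd(u,v)\in U$, and suppose the discriminant $(u+v)^2+4iuv$ of $z^2-(u+v)z-iuv=0$ is a square in $\mathbb{Z}[i]$. Then there exist $x,y\in\mathbb{Z}[i]$ with $\gcd(x,y)\in U$ such that $x-y=u+v$ and $xy=iuv$.
   Context: $\mathbb{Z}[i]$ is the ring of Gaussian integers, $U=\{1,-1,i,-i\}$ its unit group; $R(\alpha),I(\alpha)$ are real and imaginary parts. $\gcd(x,y)\in U$ means no common non-unit divisor. $O=\{\alpha: R(\alpha)+I(\alpha)\equiv1\pmod 2\}$, $O^I=\{\alpha\in O: R(\alpha)\equiv 1\pmod 4\}$. *)

theory Defs
  imports Complex_Main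
begin

definition GI :: "complex set" where
  "GI = {z. Re z \<in> \<int> \<and> Im z \<in> \<int>}"

definition gdvd :: "complex \<Rightarrow> complex \<Rightarrow> bool" (infix "gdvd" 50) where
  "a gdvd b \<longleftrightarrow> (\<exists>k\<in>GI. b = a * k)"

definition gunits :: "complex set" where
  "gunits = {1, -1, \<i>, -\<i>}"

text \<open>gcd(x,y) in U: x and y have no common non-unit divisor in Z[i].\<close>
definition gcoprime :: "complex \<Rightarrow> complex \<Rightarrow> bool" where
  "gcoprime x y \<longleftrightarrow> (\<forall>d\<in>GI. d gdvd x \<and> d gdvd y \<longrightarrow> d \<in> gunits)"

definition GO :: "complex set" where
  "GO = {z\<in>GI. odd (\<lfloor>Re z\<rfloor> + \<lfloor>Im z\<rfloor>)}"

definition GOI :: "complex set" where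
  "GOI = {z\<in>GO. \<lfloor>Re z\<rfloor> mod 4 = 1}"

end

theory Submission
  imports Defs
begin

lemma GI_iff: "z \<in> GI \<longleftrightarrow> Re z \<in> \<int> \<and> Im z \<in> \<int>" by (simp add: GI_def)

lemma GI_add[intro]: "a \<in> GI \<Longrightarrow> b \<in> GI \<Longrightarrow> a + b \<in> GI" by (simp add: GI_iff)
lemma GI_diff[intro]: "a \<in> GI \<Longrightarrow> b \<in> GI \<Longrightarrow> a - b \<in> GI" by (simp add: GI_iff)
lemma GI_uminus[intro]: "a \<in> GI \<Longrightarrow> - a \<in> GI" by (simp add: GI_iff)
lemma GI_mult[intro]: "a \<in> GI \<Longrightarrow> b \<in> GI \<Longrightarrow> a * b \<in> GI" by (simp add: GI_iff)
lemma GI_pow[intro]: "a \<in> GI \<Longrightarrow> a ^ n \<in> GI" by (induction n) (auto simp: GI_iff)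
lemma GI_1[simp,intro]: "1 \<in> GI" by (simp add: GI_iff)
lemma GI_0[simp,intro]: "0 \<in> GI" by (simp add: GI_iff)
lemma GI_i[simp,intro]: "\<i> \<in> GI" by (simp add: GI_iff)
lemma GI_numeral[simp,intro]: "numeral n \<in> GI" by (simp add: GI_iff)

lemma gdvd_mult[intro]: "d gdvd a \<Longrightarrow> c \<in> GI \<Longrightarrow> d gdvd a * c"
  unfolding gdvd_def by (metis GI_mult mult.assoc)
lemma gdvd_add[intro]: "d gdvd a \<Longrightarrow> d gdvd b \<Longrightarrow> d gdvd a + b"
  unfolding gdvd_def by (metis GI_add distrib_left)
lemma gdvd_diff[intro]: "d gdvd a \<Longrightarrow> d gdvd b \<Longrightarrow> d gdvd a - b"
  unfolding gdvd_def by (metis GI_diff right_diff_distrib)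

lemma GI_norm: "z \<in> GI \<Longrightarrow> cmod z ^ 2 \<in> \<int>"
  by (simp add: GI_iff cmod_power2)

definition N :: "complex \<Rightarrow> nat" where "N z = nat \<lfloor>cmod z ^ 2\<rfloor>"

lemma N_real: "z \<in> GI \<Longrightarrow> real (N z) = cmod z ^ 2"
proof -
  assume "z \<in> GI"
  then obtain k where k: "cmod z ^ 2 = of_int k" using GI_norm Ints_cases by metis
  have "k \<ge> 0" using k by (metis norm_ge_zero of_int_0_le_iff zero_le_power2)
  then show ?thesis using k by (simp add: N_def)
qed

lemma N_less: "a \<in> GI \<Longrightarrow> b \<in> GI \<Longrightarrow> cmod a < cmod b \<Longrightarrow> N a < N b"
proof -
  assume a: "a \<in> GI" and b: "b \<in> GI" and l: "cmod a < cmod b"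
  have "cmod a ^ 2 < cmod b ^ 2" using l by (simp add: power_strict_mono)
  then have "real (N a) < real (N b)" using N_real a b by simp
  then show ?thesis by simp
qed

lemma gdiv: assumes a: "a \<in> GI" and b: "b \<in> GI" and b0: "b \<noteq> 0"
  shows "\<exists>q\<in>GI. cmod (a - q * b) < cmod b"
proof -
  define z where "z = a / b"
  define q where "q = Complex (of_int (round (Re z))) (of_int (round (Im z)))"
  have qG: "q \<in> GI" by (simp add: q_def GI_iff)
  have h1: "\<bar>Re (z - q)\<bar> \<le> 1/2" unfolding q_def using of_int_round_abs_le[of "Re z"] by (simp add: abs_minus_commute)
  have h2: "\<bar>Im (z - q)\<bar> \<le> 1/2" unfolding q_def using of_int_round_abs_le[of "Im z"] by (simp add: abs_minus_commute)
  have e1: "Re (z - q) ^ 2 \<le> 1/4"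
  proof -
    have "\<bar>Re (z - q)\<bar> ^ 2 \<le> (1/2) ^ 2" using h1 by (intro power_mono) auto
    then show ?thesis by (simp add: power2_abs power_divide)
  qed
  have e2: "Im (z - q) ^ 2 \<le> 1/4"
  proof -
    have "\<bar>Im (z - q)\<bar> ^ 2 \<le> (1/2) ^ 2" using h2 by (intro power_mono) auto
    then show ?thesis by (simp add: power2_abs power_divide)
  qed
  have "cmod (z - q) ^ 2 < 1 ^ 2" using e1 e2 by (simp add: cmod_power2)
  then have lt: "cmod (z - q) < 1" using power2_less_imp_less by fastforce
  have "a - q * b = b * (z - q)" using b0 by (simp add: z_def algebra_simps)
  then have "cmod (a - q * b) = cmod b * cmod (z - q)" by (simp add: norm_mult)
  also have "\<dots> < cmod b" using lt b0 by simp
  finally show ?thesis using qG by blast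
qed

lemma unit_lemma: assumes d: "d \<in> GI" and k: "k \<in> GI" and dk: "d * k = 1"
  shows "d \<in> gunits"
proof -
  have "cmod d ^ 2 * cmod k ^ 2 = 1" using dk by (metis norm_mult norm_one power_mult_distrib one_power2)
  then have "real (N d) * real (N k) = 1" using N_real d k by simp
  then have "N d * N k = 1" by (metis of_nat_eq_1_iff of_nat_mult)
  then have "N d = 1" by simp
  then have c: "cmod d ^ 2 = 1" using N_real[OF d] by simp
  obtain A where A: "Re d = of_int A" using d by (auto simp: GI_iff elim: Ints_cases)
  obtain B where B: "Im d = of_int B" using d by (auto simp: GI_iff elim: Ints_cases)
  have "real_of_int (A^2 + B^2) = 1" using c A B by (simp add: cmod_power2)
  then have AB: "A^2 + B^2 = 1" by linarith
  then have "A^2 \<le> 1" "B^2 \<le> 1" by (smt (verit) zero_le_power2)+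
  then have "\<bar>A\<bar> \<le> 1" "\<bar>B\<bar> \<le> 1" by (simp_all add: abs_square_le_1)
  then have "A \<in> {-1,0,1}" "B \<in> {-1,0,1}" by auto
  then have "(A = 1 \<and> B = 0) \<or> (A = -1 \<and> B = 0) \<or> (A = 0 \<and> B = 1) \<or> (A = 0 \<and> B = -1)"
    using AB by auto
  then show ?thesis unfolding gunits_def using A B by (auto simp: complex_eq_iff)
qed

lemma bezout: assumes u: "u \<in> GI" and v: "v \<in> GI" and nz: "u \<noteq> 0 \<or> v \<noteq> 0"
  and cop: "gcoprime u v"
  shows "\<exists>p\<in>GI. \<exists>q\<in>GI. p * u + q * v = 1"
proof -
  define S where "S = {x. \<exists>p\<in>GI. \<exists>q\<in>GI. x = p * u + q * v}"
  have SI: "p * u + q * v \<in> S" if "p \<in> GI" "q \<in> GI" for p q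
    using that unfolding S_def by blast
  have SG: "x \<in> GI" if "x \<in> S" for x using that u v unfolding S_def by blast
  obtain x0 where x0: "x0 \<in> S \<and> x0 \<noteq> 0"
  proof (cases "u = 0")
    case True
    have "0 * u + 1 * v \<in> S" by (rule SI) auto
    then show ?thesis using True nz that by simp
  next
    case False
    have "1 * u + 0 * v \<in> S" by (rule SI) auto
    then show ?thesis using False that by simp
  qed
  from ex_has_least_nat[of "\<lambda>x. x \<in> S \<and> x \<noteq> 0" x0 N, OF x0]
  obtain g where gS: "g \<in> S \<and> g \<noteq> 0" and gmin: "\<forall>h. h \<in> S \<and> h \<noteq> 0 \<longrightarrow> N g \<le> N h"
    by blast
  obtain p q where pq: "p \<in> GI" "q \<in> GI" "g = p * u + q * v" using gS unfolding S_def by blast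
  have gG: "g \<in> GI" using SG gS by blast
  have g0: "g \<noteq> 0" using gS by blast
  have dv: "g gdvd a" if a: "a \<in> GI" and aS: "\<And>c. c \<in> GI \<Longrightarrow> a - c * g \<in> S" for a
  proof -
    obtain c where c: "c \<in> GI" "cmod (a - c * g) < cmod g" using gdiv[OF a gG g0] by blast
    have "a - c * g = 0"
    proof (rule ccontr)
      assume nz: "a - c * g \<noteq> 0"
      have "a - c * g \<in> S" using aS c(1) by simp
      then have "N g \<le> N (a - c * g)" using gmin nz by simp
      moreover have "N (a - c * g) < N g" using N_less[OF _ gG c(2)] c(1) gG a by blast
      ultimately show False by simp
    qed
    then have "a = g * c" by (simp add: algebra_simps)
    then show ?thesis unfolding gdvd_def using c(1) by blast
  qed
  have "g gdvd u"
  proof (rule dv[OF u])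
    fix c assume c: "c \<in> GI"
    have "u - c * g = (1 - c * p) * u + (- (c * q)) * v" using pq by (simp add: algebra_simps)
    also have "\<dots> \<in> S" using c pq by (intro SI) auto
    finally show "u - c * g \<in> S" .
  qed
  moreover have "g gdvd v"
  proof (rule dv[OF v])
    fix c assume c: "c \<in> GI"
    have "v - c * g = (- (c * p)) * u + (1 - c * q) * v" using pq by (simp add: algebra_simps)
    also have "\<dots> \<in> S" using c pq by (intro SI) auto
    finally show "v - c * g \<in> S" .
  qed
  ultimately have "g \<in> gunits" using cop gG unfolding gcoprime_def by blast
  then have "g = 1 \<or> g = -1 \<or> g = \<i> \<or> g = -\<i>" unfolding gunits_def by simp
  then have "\<exists>h\<in>GI. h * g = 1"
  proof (elim disjE)
    assume "g = 1" then show ?thesis by (intro bexI[of _ 1]) auto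
  next
    assume "g = -1" then show ?thesis by (intro bexI[of _ "-1"]) auto
  next
    assume "g = \<i>" then show ?thesis by (intro bexI[of _ "-\<i>"]) auto
  next
    assume "g = -\<i>" then show ?thesis by (intro bexI[of _ "\<i>"]) auto
  qed
  then obtain h where h: "h \<in> GI" "h * g = 1" by blast
  have "(h * p) * u + (h * q) * v = 1" using h pq by (simp add: algebra_simps)
  then show ?thesis using h pq by blast
qed

lemma sq_mod4: "(x::int)^2 mod 4 = (if even x then 0 else 1)"
proof (cases "even x")
  case True then obtain k where "x = 2 * k" by blast
  then show ?thesis by (simp add: power2_eq_square)
next
  case False then obtain k where k: "x = 2 * k + 1" using oddE by blast
  have "x^2 = 4 * (k*k + k) + 1" unfolding k by (simp add: power2_eq_square algebra_simps)
  moreover have "\<And>t::int. (4 * t + 1) mod 4 = 1" by presburger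
  ultimately show ?thesis using False by (simp only: if_False)
qed

lemma parity_aux:
  fixes A B C D M X Y P Q :: int
  assumes "X mod 4 = (if even C then 0 else 1)" "Y mod 4 = (if even D then 0 else 1)"
    "P mod 4 = (if even A then 0 else 1)" "Q mod 4 = (if even B then 0 else 1)"
    "X - Y = P - Q + 4 * M" "odd A" "even B"
  shows "odd C \<and> even D"
  using assms by presburger

theorem corollary4p22:
  fixes u v :: complex
  assumes "u \<in> GI" and "v \<in> GI"
    and "u + v \<in> GOI"
    and "(1 + \<i>) gdvd (u * v)"
    and "gcoprime u v"
    and "\<exists>w\<in>GI. w ^ 2 = (u + v) ^ 2 + 4 * \<i> * u * v"
  shows "\<exists>x\<in>GI. \<exists>y\<in>GI. gcoprime x y \<and> x - y = u + v \<and> x * y = \<i> * u * v"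
proof -
  note uG = assms(1) and vG = assms(2)
  define s where "s = u + v"
  define m where "m = \<i> * u * v"
  have sG: "s \<in> GI" using uG vG by (auto simp: s_def)
  have mG: "m \<in> GI" using uG vG by (auto simp: m_def)
  obtain w where wG: "w \<in> GI" and weq: "w^2 = s^2 + 4 * m"
    using assms(6) by (auto simp: s_def m_def algebra_simps)
  obtain A where A: "Re s = of_int A" using sG by (auto simp: GI_iff elim: Ints_cases)
  obtain B where B: "Im s = of_int B" using sG by (auto simp: GI_iff elim: Ints_cases)
  obtain C where C: "Re w = of_int C" using wG by (auto simp: GI_iff elim: Ints_cases)
  obtain D where D: "Im w = of_int D" using wG by (auto simp: GI_iff elim: Ints_cases)
  obtain M where M: "Re m = of_int M" using mG by (auto simp: GI_iff elim: Ints_cases)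
  have "Re (w^2) = Re (s^2 + 4 * m)" using weq by simp
  then have "real_of_int (C^2 - D^2) = real_of_int (A^2 - B^2 + 4 * M)"
    using A B C D M by (simp add: power2_eq_square)
  then have eq: "C^2 - D^2 = A^2 - B^2 + 4 * M" by (metis of_int_eq_iff)
  have sO: "odd (A + B)" "A mod 4 = 1" using assms(3) A B by (auto simp: GOI_def GO_def s_def)
  then have oA: "odd A" and eB: "even B" by presburger+
  have "odd C \<and> even D"
    by (rule parity_aux[OF sq_mod4 sq_mod4 sq_mod4 sq_mod4 eq oA eB])
  then have eAC: "even (A + C)" and eBD: "even (B + D)" and eCA: "even (C - A)" and eDB: "even (D - B)"
    using oA eB by auto
  define x where "x = (s + w) / 2"
  define y where "y = (w - s) / 2"
  have xG: "x \<in> GI"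
  proof -
    obtain k where k: "A + C = 2 * k" using eAC by blast
    obtain l where l: "B + D = 2 * l" using eBD by blast
    have "Re x = of_int k" using A C k by (simp add: x_def)
    moreover have "Im x = of_int l" using B D l by (simp add: x_def)
    ultimately show ?thesis by (simp add: GI_iff)
  qed
  have yG: "y \<in> GI"
  proof -
    obtain k where k: "C - A = 2 * k" using eCA by blast
    obtain l where l: "D - B = 2 * l" using eDB by blast
    have "Re y = of_int k" using A C k by (simp add: y_def)
    moreover have "Im y = of_int l" using B D l by (simp add: y_def)
    ultimately show ?thesis by (simp add: GI_iff)
  qed
  have xy1: "x - y = s" by (simp add: x_def y_def field_simps)
  have xy2: "x * y = m"
  proof -
    have "x * y = (w^2 - s^2) / 4" by (simp add: x_def y_def field_simps power2_eq_square)
    then show ?thesis using weq by simp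
  qed
  have s0: "s \<noteq> 0" proof
    assume "s = 0" then have "A = 0" "B = 0" using A B by auto
    then show False using sO(1) by simp
  qed
  then have nz: "u \<noteq> 0 \<or> v \<noteq> 0" by (auto simp: s_def)
  obtain p q where pq: "p \<in> GI" "q \<in> GI" "p * u + q * v = 1" using bezout[OF uG vG nz assms(5)] by blast
  have cop: "gcoprime x y" unfolding gcoprime_def
  proof (intro ballI impI)
    fix d assume dG: "d \<in> GI" and dd: "d gdvd x \<and> d gdvd y"
    have ds: "d gdvd s" using dd xy1 gdvd_diff by metis
    have "d gdvd x * y" using dd yG by blast
    then have "d gdvd m * (- \<i>)" using xy2 by (intro gdvd_mult) auto
    moreover have "m * (- \<i>) = u * v" by (simp add: m_def algebra_simps)
    ultimately have duv: "d gdvd u * v" by simp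
    have "d gdvd s * u - u * v" using ds duv uG by blast
    moreover have "s * u - u * v = u^2" by (simp add: s_def power2_eq_square algebra_simps)
    ultimately have du: "d gdvd u^2" by simp
    have "d gdvd s * v - u * v" using ds duv vG by blast
    moreover have "s * v - u * v = v^2" by (simp add: s_def power2_eq_square algebra_simps)
    ultimately have dv: "d gdvd v^2" by simp
    have "d gdvd u^2 * (p^3 * u + 3 * p^2 * q * v) + v^2 * (3 * p * q^2 * u + q^3 * v)"
      using du dv pq uG vG by (intro gdvd_add gdvd_mult GI_add GI_mult GI_pow GI_numeral) auto
    moreover have "u^2 * (p^3 * u + 3 * p^2 * q * v) + v^2 * (3 * p * q^2 * u + q^3 * v) = (p * u + q * v)^3"
      by (simp add: power2_eq_square power3_eq_cube algebra_simps)
    ultimately have "d gdvd 1" using pq by simp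
    then obtain k where "k \<in> GI" "1 = d * k" unfolding gdvd_def by blast
    then show "d \<in> gunits" using unit_lemma dG by metis
  qed
  show ?thesis using xG yG cop xy1 xy2 by (auto simp: s_def m_def)
qed

end
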